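(* Let $\rho\in[0,1]$ and define $\gamma_k(1)$, $\Gamma_k(1,\rho)$ as in the context. (a) If $\alpha_k=2/(k+1)$, $k=1,2,\ldots$, then $\alpha_k\in(0,1]$, $\alpha_1=1$, and $\gamma_k(1)\|\Gamma_k(1,\rho)\|_{\frac{2}{1-\rho}}\le ck^{-\frac{1+3\rho}{2}}$ for all $k\ge1$ with $c=2^{1+\rho}3^{-\frac{1-\rho}{2}}$. (b) If $\alpha_k$ are defined recursively by $\alpha_1=\gamma_1=1$, $\gamma_k=\alpha_k^2=(1-\alpha_k)\gamma_{k-1}$ for $k\ge2$ (with $\alpha_k>0$), then $\alpha_k\in(0,1]$ for all $k\ge1$, and the condition of (a) ($\alpha_1=1$ and $\gamma_k(1)\|\Gamma_k(1,\rho)\|_{\frac{2}{1-\rho}}\le ck^{-\frac{1+3\rho}{2}}$ for all $k$) holds with $c=\frac{4}{3^{(1-\rho)/2}}$.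
   Context: For $\alpha_k\in(0,1]$: $\gamma_1(1)=1$, $\gamma_k(1)=(1-\alpha_k)\gamma_{k-1}(1)$ for $k\ge2$; $\Gamma_k(1,\rho)=(\gamma_1(1)^{-1}\alpha_1^{1+\rho},\ldots,\gamma_k(1)^{-1}\alpha_k^{1+\rho})\in\mathbb{R}^k$; $\|\cdot\|_p$ is the $\ell_p$ norm, with $\frac{2}{1-\rho}=\infty$ when $\rho=1$. *)

theory Defs
  imports "HOL-Analysis.Analysis"
begin

text \<open>gamma_k(1): gam a 1 = 1, gam a k = (1 - a k) * gam a (k-1) for k >= 2.
  The value at index 0 is an irrelevant convention.\<close>
fun gam :: "(nat \<Rightarrow> real) \<Rightarrow> nat \<Rightarrow> real" where
  "gam a 0 = 1"
| "gam a (Suc 0) = 1"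
| "gam a (Suc (Suc n)) = (1 - a (Suc (Suc n))) * gam a (Suc n)"

definition Gam_entry :: "(nat \<Rightarrow> real) \<Rightarrow> real \<Rightarrow> nat \<Rightarrow> real" where
  "Gam_entry a \<rho> i = a i powr (1 + \<rho>) / gam a i"

definition lp_norm :: "ereal \<Rightarrow> (nat \<Rightarrow> real) \<Rightarrow> nat \<Rightarrow> real" where
  "lp_norm p x k =
     (if p = \<infinity> then Max ((\<lambda>i. \<bar>x i\<bar>) ` {1..k})
      else (\<Sum>i=1..k. \<bar>x i\<bar> powr real_of_ereal p) powr (1 / real_of_ereal p))"

definition expo :: "real \<Rightarrow> ereal" where
  "expo \<rho> = (if \<rho> = 1 then \<infinity> else ereal (2 / (1 - \<rho>)))"

definition rate_cond :: "(nat \<Rightarrow> real) \<Rightarrow> real \<Rightarrow> real \<Rightarrow> bool" where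
  "rate_cond a \<rho> c \<longleftrightarrow> a 1 = 1 \<and>
     (\<forall>k\<ge>1. gam a k * lp_norm (expo \<rho>) (Gam_entry a \<rho>) k
              \<le> c * real k powr (- (1 + 3 * \<rho>) / 2))"

end

theory Submission
  imports Defs
begin


lemma sumsq: "(\<Sum>i=1..k. (real i)^2) = real k*(real k+1)*(2*real k+1)/6"
  by (induction k) (auto simp: field_simps power2_eq_square)

lemma sumsq_le: "(\<Sum>i=1..k. (real i)^2) \<le> real k*(real k+1)^2/3"
  unfolding sumsq by (auto simp: field_simps power2_eq_square)

lemma lp_fin:
  assumes "0 \<le> \<rho>" "\<rho> < 1" "\<forall>i\<in>{1..k}. \<bar>x i\<bar> powr (2/(1-\<rho>)) \<le> B * (real i)^2" "B \<ge> 0"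
  shows "lp_norm (expo \<rho>) x k \<le> (B * (real k * (real k+1)^2/3)) powr ((1-\<rho>)/2)"
proof -
  have e: "expo \<rho> = ereal (2/(1-\<rho>))" using assms by (simp add: expo_def)
  have "lp_norm (expo \<rho>) x k = (\<Sum>i=1..k. \<bar>x i\<bar> powr (2/(1-\<rho>))) powr ((1-\<rho>)/2)"
    by (simp add: lp_norm_def e)
  also have "\<dots> \<le> (B * (real k * (real k+1)^2/3)) powr ((1-\<rho>)/2)"
  proof (rule powr_mono2)
    show "0 \<le> (1-\<rho>)/2" using assms by simp
    show "0 \<le> (\<Sum>i=1..k. \<bar>x i\<bar> powr (2/(1-\<rho>)))" by (simp add: sum_nonneg)
    have "(\<Sum>i=1..k. \<bar>x i\<bar> powr (2/(1-\<rho>))) \<le> (\<Sum>i=1..k. B * (real i)^2)"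
      by (rule sum_mono) (use assms in auto)
    also have "\<dots> = B * (\<Sum>i=1..k. (real i)^2)" by (simp add: sum_distrib_left)
    also have "\<dots> \<le> B * (real k * (real k+1)^2/3)" by (rule mult_left_mono[OF sumsq_le assms(4)])
    finally show "(\<Sum>i=1..k. \<bar>x i\<bar> powr (2/(1-\<rho>))) \<le> B * (real k * (real k+1)^2/3)" .
  qed
  finally show ?thesis .
qed

lemma lp_inf:
  assumes "k \<ge> 1" "\<forall>i\<in>{1..k}. \<bar>x i\<bar> \<le> M"
  shows "lp_norm (expo 1) x k \<le> M"
  using assms by (simp add: lp_norm_def expo_def)

lemma key_powr:
  fixes k e :: real
  assumes "k \<ge> 1" "0 \<le> e" "e \<le> 1"
  shows "(k+1) powr e \<le> (k+1)/k * k powr e"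
proof -
  have "(k+1) powr e = ((k+1)/k) powr e * k powr e"
    using assms by (simp add: powr_mult[symmetric])
  also have "((k+1)/k) powr e \<le> ((k+1)/k) powr 1"
    using assms by (intro powr_mono) auto
  hence "((k+1)/k) powr e * k powr e \<le> (k+1)/k * k powr e"
    using assms by (intro mult_right_mono) auto
  finally show ?thesis .
qed



lemma gamA:
  assumes "\<forall>k\<ge>1. a k = 2 / (real k + 1)"
  shows "gam a (Suc n) = 2 / ((real n + 1) * (real n + 2))"
proof (induction n)
  case 0 then show ?case by simp
next
  case (Suc n)
  have "a (Suc (Suc n)) = 2 / (real (Suc (Suc n)) + 1)" using assms[rule_format, of "Suc (Suc n)"] by simp
  hence "a (Suc (Suc n)) = 2 / (real n + 3)" by (simp add: add.commute)
  have "gam a (Suc (Suc n)) = (1 - 2 / (real n + 3)) * (2 / ((real n + 1) * (real n + 2)))"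
    using Suc \<open>a (Suc (Suc n)) = 2 / (real n + 3)\<close> by simp
  also have "\<dots> = 2 / ((real (Suc n) + 1) * (real (Suc n) + 2))"
    proof -
    have x: "real n \<ge> 0" by simp
    have "1 - 2 / (real n + 3) = (real n + 1) / (real n + 3)" using x by (simp add: field_simps)
    hence "(1 - 2 / (real n + 3)) * (2 / ((real n + 1) * (real n + 2))) = 2 / ((real n + 2) * (real n + 3))"
    proof -
      have h: "real n + 1 \<noteq> 0" "real n + 2 \<noteq> 0" "real n + 3 \<noteq> 0" using x by linarith+
      show ?thesis unfolding \<open>1 - 2 / (real n + 3) = (real n + 1) / (real n + 3)\<close>
        using h by (simp add: divide_simps)
    qed
    thus ?thesis by (simp add: add.commute add.left_commute mult.commute)
  qed
  finally show ?case .
qed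

lemma entryA:
  assumes "\<forall>k\<ge>1. a k = 2 / (real k + 1)" "i \<ge> 1" "0 \<le> \<rho>" "\<rho> \<le> 1"
  shows "0 \<le> Gam_entry a \<rho> i \<and> Gam_entry a \<rho> i \<le> 2 powr \<rho> * real i powr (1 - \<rho>)"
proof -
  obtain n where n: "i = Suc n" using assms(2) by (cases i) auto
  have g: "gam a i = 2 / (real i * (real i + 1))" using gamA[OF assms(1), of n] n by (simp add: field_simps)
  have ai: "a i = 2 / (real i + 1)" using assms by auto
  have ip: "real i > 0" using assms by simp
  have "Gam_entry a \<rho> i = (2 / (real i + 1)) powr \<rho> * real i"
    unfolding Gam_entry_def g ai using ip by (simp add: powr_add field_simps)
  moreover have "(2 / (real i + 1)) powr \<rho> \<le> (2 / real i) powr \<rho>"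
    using ip assms by (intro powr_mono2) (auto simp: field_simps)
  moreover have "(2 / real i) powr \<rho> * real i = 2 powr \<rho> * real i powr (1 - \<rho>)"
    using ip by (simp add: powr_divide powr_diff)
  ultimately show ?thesis using ip
    by (smt (verit, best) mult_right_mono of_nat_0_le_iff powr_ge_zero zero_le_mult_iff)
qed



lemma S_bound:
  fixes k q :: real
  assumes "k \<ge> 1" "0 \<le> q" "q \<le> 1/2"
  shows "(k*(k+1)^2/3) powr q \<le> 3 powr (-q) * ((k+1)/k) * k powr (3*q)"
proof -
  have kp: "k > 0" using assms by simp
  have sq: "((k+1)^2) powr q = (k+1) powr (2*q)"
  proof -
    have "(k+1)^2 = (k+1) powr 2" using kp by (simp add: powr_realpow)
    hence "((k+1)^2) powr q = ((k+1) powr 2) powr q" by simp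
    also have "\<dots> = (k+1) powr (2*q)" by (simp add: powr_powr)
    finally show ?thesis .
  qed
  have "(k*(k+1)^2/3) powr q = k powr q * (k+1) powr (2*q) / 3 powr q"
    using kp by (simp add: powr_divide powr_mult sq)
  also have "\<dots> \<le> k powr q * ((k+1)/k * k powr (2*q)) / 3 powr q"
    using key_powr[of k "2*q"] assms
    by (intro divide_right_mono mult_left_mono) auto
  also have "\<dots> = 3 powr (-q) * ((k+1)/k) * (k powr q * k powr (2*q))"
    by (simp add: powr_minus divide_inverse mult_ac)
  also have "k powr q * k powr (2*q) = k powr (3*q)"
    by (simp add: powr_add[symmetric])
  finally show ?thesis .
qed

lemma kpow:
  fixes k q :: real
  assumes "k > 0"
  shows "k powr (3*q - 2) = k powr (3*q) / k^2"
  using assms by (simp add: powr_diff powr_realpow)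



lemma algA:
  fixes k A B C :: real
  assumes "k > 0"
  shows "2 / (k * (k + 1)) * (A * (B * ((k+1)/k) * C)) = (2 * A * B) * (C / k ^ 2)"
proof -
  have "k + 1 > 0" "k \<noteq> 0" "k + 1 \<noteq> 0" using assms by auto
  have e: "(k+1) / (k * (k+1) * k) = 1 / k^2"
    using \<open>k + 1 \<noteq> 0\<close> \<open>k \<noteq> 0\<close> by (simp add: power2_eq_square)
  have "2 / (k * (k + 1)) * (A * (B * ((k+1)/k) * C)) = (2 * A * B * C) * ((k+1) / (k * (k+1) * k))"
    by (simp add: field_simps)
  also have "\<dots> = (2 * A * B) * (C / k ^ 2)" unfolding e by simp
  finally show ?thesis .
qed

lemma partA:
  assumes r0: "0 \<le> \<rho>" and r1: "\<rho> \<le> 1" and A: "\<forall>k\<ge>1. a k = 2 / (real k + 1)"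
  shows "(\<forall>k\<ge>1. 0 < a k \<and> a k \<le> 1) \<and> rate_cond a \<rho> (2 powr (1 + \<rho>) * 3 powr (- (1 - \<rho>) / 2))"
proof -
  have pos: "\<forall>k\<ge>1. 0 < a k \<and> a k \<le> 1" using A by auto
  have a1: "a 1 = 1" using A by simp
  have main: "gam a k * lp_norm (expo \<rho>) (Gam_entry a \<rho>) k
              \<le> (2 powr (1 + \<rho>) * 3 powr (- (1 - \<rho>) / 2)) * real k powr (- (1 + 3 * \<rho>) / 2)"
    if k1: "k \<ge> 1" for k
  proof -
    obtain n where n: "k = Suc n" using k1 by (cases k) auto
    have kp: "real k > 0" using k1 by simp
    have g: "gam a k = 2 / (real k * (real k + 1))" using gamA[OF A, of n] n by (simp add: field_simps)
    have ent: "\<forall>i\<in>{1..k}. 0 \<le> Gam_entry a \<rho> i \<and> Gam_entry a \<rho> i \<le> 2 powr \<rho> * real i powr (1 - \<rho>)"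
      using entryA[OF A _ r0 r1] by auto
    show ?thesis
    proof (cases "\<rho> = 1")
      case True
      have "lp_norm (expo 1) (Gam_entry a 1) k \<le> 2"
        using ent True by (intro lp_inf k1) auto
      hence "gam a k * lp_norm (expo 1) (Gam_entry a 1) k \<le> 2 / (real k * (real k + 1)) * 2"
        unfolding g using kp by (intro mult_left_mono) auto
      also have "\<dots> = 4 / (real k * (real k + 1))" by simp
      also have "\<dots> \<le> 4 / real k ^ 2" using kp unfolding power2_eq_square
        by (intro divide_left_mono mult_left_mono) auto
      also have "\<dots> = (2 powr (1 + 1) * 3 powr (- (1 - 1) / 2)) * real k powr (- (1 + 3 * 1) / 2)"
      proof -
        have h1: "2 powr (1 + 1::real) = 4" by simp
        have h2: "3 powr (- (1 - 1) / 2::real) = 1" by simp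
        have h3: "real k powr (- (1 + 3 * 1) / 2) = inverse (real k ^ 2)"
          using kp by (simp add: powr_minus)
        show ?thesis unfolding h1 h2 h3 by (simp add: divide_inverse)
      qed
      finally show ?thesis using True by simp
    next
      case False
      hence rl: "\<rho> < 1" using r1 by simp
      define q where "q = (1 - \<rho>) / 2"
      have q0: "0 \<le> q" "q \<le> 1/2" using r0 rl by (auto simp: q_def)
      define p where "p = 2 / (1 - \<rho>)"
      have p0: "p \<ge> 0" using rl by (simp add: p_def)
      have pq: "p * q = 1" using rl by (simp add: p_def q_def)
      have bnd: "\<forall>i\<in>{1..k}. \<bar>Gam_entry a \<rho> i\<bar> powr p \<le> 2 powr (\<rho> * p) * (real i)^2"
      proof
        fix i assume i: "i \<in> {1..k}"
        hence ip: "real i > 0" by simp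
        have "\<bar>Gam_entry a \<rho> i\<bar> powr p \<le> (2 powr \<rho> * real i powr (1 - \<rho>)) powr p"
          using ent i p0 by (intro powr_mono2) auto
        also have "\<dots> = 2 powr (\<rho> * p) * real i powr ((1 - \<rho>) * p)"
          by (subst powr_mult) (auto simp: powr_powr)
        also have "(1 - \<rho>) * p = 2" using rl unfolding p_def by (simp add: field_simps)
        also have "real i powr 2 = (real i)^2" using ip by (simp add: powr_realpow)
        finally show "\<bar>Gam_entry a \<rho> i\<bar> powr p \<le> 2 powr (\<rho> * p) * (real i)^2" .
      qed
      have "lp_norm (expo \<rho>) (Gam_entry a \<rho>) k \<le> (2 powr (\<rho> * p) * (real k * (real k+1)^2/3)) powr q"
        unfolding q_def
      proof (rule lp_fin[OF r0 rl])
        show "\<forall>i\<in>{1..k}. \<bar>Gam_entry a \<rho> i\<bar> powr (2 / (1 - \<rho>)) \<le> 2 powr (\<rho> * p) * (real i)^2"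
          using bnd unfolding p_def .
      qed simp
      also have "\<dots> = 2 powr \<rho> * (real k * (real k+1)^2/3) powr q"
      proof -
        have "(2 powr (\<rho>*p)) powr q = 2 powr \<rho>" by (simp add: powr_powr mult.assoc pq)
        thus ?thesis by (subst powr_mult) auto
      qed
      also have "\<dots> \<le> 2 powr \<rho> * (3 powr (-q) * ((real k+1)/real k) * real k powr (3*q))"
        using S_bound[of "real k" q] k1 q0 by (intro mult_left_mono) auto
      finally have L: "lp_norm (expo \<rho>) (Gam_entry a \<rho>) k \<le> 2 powr \<rho> * (3 powr (-q) * ((real k+1)/real k) * real k powr (3*q))" .
      have "gam a k * lp_norm (expo \<rho>) (Gam_entry a \<rho>) k
          \<le> 2 / (real k * (real k + 1)) * (2 powr \<rho> * (3 powr (-q) * ((real k+1)/real k) * real k powr (3*q)))"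
        unfolding g using kp L by (intro mult_left_mono) auto
      also have "\<dots> = (2 * 2 powr \<rho> * 3 powr (-q)) * (real k powr (3*q) / real k ^ 2)"
        using kp by (rule algA)
      also have "\<dots> = (2 powr (1 + \<rho>) * 3 powr (- (1 - \<rho>) / 2)) * real k powr (- (1 + 3 * \<rho>) / 2)"
      proof -
        have e1: "- (1 + 3 * \<rho>) / 2 = 3*q - 2" unfolding q_def by (simp add: field_simps)
        have e2: "- (1 - \<rho>) / 2 = -q" unfolding q_def by (simp add: field_simps)
        show ?thesis unfolding e1 e2 kpow[OF kp] by (simp add: powr_add)
      qed
      finally show ?thesis .
    qed
  qed
  show ?thesis using pos a1 main by (simp add: rate_cond_def)
qed


lemma step_us:
  fixes u w :: real
  assumes "w > 0" "u > 0" "w^2 = u^2 - u"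
  shows "w + 1/2 \<le> u \<and> u \<le> w + 1"
proof -
  have "u * (u - 1) = w^2" using assms(3) by (simp add: algebra_simps power2_eq_square)
  hence "u * (u - 1) > 0" using assms(1) by simp
  hence u1: "u > 1" using assms(2) by (simp add: zero_less_mult_iff)
  have "(2*u - 2*w - 1) * (2*u + 2*w - 1) = 1" using assms(3) by (simp add: algebra_simps power2_eq_square)
  moreover have "2*u + 2*w - 1 > 0" using u1 assms by simp
  ultimately have "2*u - 2*w - 1 > 0" by (smt (verit) mult_nonpos_nonneg)
  moreover have "(u - w - 1) * (u + w) = - w" using assms(3) by (simp add: algebra_simps power2_eq_square)
  hence "u - w - 1 < 0" using assms u1 by (smt (verit) mult_nonneg_nonneg)
  ultimately show ?thesis by simp
qed

lemma step_a:
  fixes a b :: real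
  assumes "a > 0" "b > 0" "a^2 = (1 - a) * b^2"
  shows "1/b + 1/2 \<le> 1/a \<and> 1/a \<le> 1/b + 1"
proof -
  have "(1/b)^2 = (1/a)^2 - 1/a"
  proof -
    have "(1/b)^2 = (a^2 / b^2) / a^2" using assms by (simp add: field_simps)
    also have "\<dots> = (1 - a) / a^2" using assms by simp
    also have "\<dots> = (1/a)^2 - 1/a" using assms by (simp add: field_simps power2_eq_square)
    finally show ?thesis .
  qed
  thus ?thesis using step_us[of "1/b" "1/a"] assms by simp
qed
lemma algB:
  fixes k A C :: real
  assumes "k > 0" "A \<ge> 0" "C \<ge> 0"
  shows "4 / (k + 1)^2 * (A * ((k+1)/k) * C) \<le> (4 * A) * (C / k ^ 2)"
proof -
  have ne: "k + 1 \<noteq> 0" "k \<noteq> 0" using assms by auto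
  have "4 / (k + 1)^2 * (A * ((k+1)/k) * C) = (4 * A * C) * ((k+1) / ((k+1)*(k+1)*k))"
    by (simp add: field_simps power2_eq_square)
  also have "(k+1) / ((k+1)*(k+1)*k) = 1 / ((k+1)*k)" using ne by simp
  also have "(4 * A * C) * (1 / ((k+1)*k)) \<le> (4 * A * C) * (1 / (k*k))"
    using assms by (intro mult_left_mono divide_left_mono mult_right_mono) auto
  also have "\<dots> = (4 * A) * (C / k ^ 2)" by (simp add: power2_eq_square)
  finally show ?thesis .
qed

lemma lp_nonneg:
  assumes "k \<ge> 1"
  shows "0 \<le> lp_norm p x k"
proof (cases "p = \<infinity>")
  case True
  have "\<bar>x 1\<bar> \<le> Max ((\<lambda>i. \<bar>x i\<bar>) ` {1..k})" using assms by (intro Max_ge) auto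
  then show ?thesis using True unfolding lp_norm_def by simp
next
  case False then show ?thesis unfolding lp_norm_def by simp
qed

lemma partB:
  assumes r0: "0 \<le> \<rho>" and r1: "\<rho> \<le> 1" and a1: "a 1 = 1"
    and H: "\<forall>k\<ge>2. 0 < a k \<and> (a k)\<^sup>2 = (1 - a k) * gam a (k - 1)"
  shows "(\<forall>k\<ge>1. 0 < a k \<and> a k \<le> 1) \<and> rate_cond a \<rho> (4 / 3 powr ((1 - \<rho>) / 2))"
proof -
  have gB: "gam a (Suc n) = (a (Suc n))^2" for n
  proof (cases n)
    case 0 then show ?thesis using a1 by simp
  next
    case (Suc m)
    have "(a (Suc (Suc m)))\<^sup>2 = (1 - a (Suc (Suc m))) * gam a (Suc m)"
      using H[rule_format, of "Suc (Suc m)"] by simp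
    then show ?thesis using Suc by simp
  qed
  have posS: "0 < a (Suc n)" for n
    using a1 H[rule_format, of "Suc n"] by (cases n) auto
  have bnds: "(real n + 2) / 2 \<le> 1 / a (Suc n) \<and> 1 / a (Suc n) \<le> real n + 1" for n
  proof (induction n)
    case 0 then show ?case using a1 by simp
  next
    case (Suc n)
    have eq: "(a (Suc (Suc n)))\<^sup>2 = (1 - a (Suc (Suc n))) * (a (Suc n))^2"
      using H[rule_format, of "Suc (Suc n)"] gB[of n] by simp
    have "1 / a (Suc n) + 1/2 \<le> 1 / a (Suc (Suc n)) \<and> 1 / a (Suc (Suc n)) \<le> 1 / a (Suc n) + 1"
      using step_a[OF posS posS eq] .
    then show ?case using Suc by auto
  qed
  have le1S: "a (Suc n) \<le> 1" for n
  proof -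
    have "1 \<le> 1 / a (Suc n)" using bnds[of n] by simp
    thus ?thesis using posS[of n] by (simp add: field_simps)
  qed
  have pos: "\<forall>k\<ge>1. 0 < a k \<and> a k \<le> 1"
  proof (intro allI impI)
    fix k :: nat assume "k \<ge> 1"
    then obtain n where "k = Suc n" by (cases k) auto
    thus "0 < a k \<and> a k \<le> 1" using posS le1S by simp
  qed
  have main: "gam a k * lp_norm (expo \<rho>) (Gam_entry a \<rho>) k
              \<le> (4 / 3 powr ((1 - \<rho>) / 2)) * real k powr (- (1 + 3 * \<rho>) / 2)"
    if k1: "k \<ge> 1" for k
  proof -
    obtain n where n: "k = Suc n" using k1 by (cases k) auto
    have kp: "real k > 0" using k1 by simp
    have ak: "a k > 0" using posS n by simp
    have gk: "gam a k \<le> 4 / (real k + 1)^2"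
    proof -
      have "(real k + 1) / 2 \<le> 1 / a k" using bnds[of n] n by (simp add: add.commute)
      hence "a k * (real k + 1) \<le> 2" using ak by (simp add: field_simps)
      hence "(a k * (real k + 1))^2 \<le> 2^2" using ak kp by (intro power_mono) auto
      hence "(a k)^2 * (real k + 1)^2 \<le> 4" by (simp add: power_mult_distrib)
      hence "(a k)^2 \<le> 4 / (real k + 1)^2" using kp by (simp add: field_simps)
      thus ?thesis using gB[of n] n by simp
    qed
    have ent: "Gam_entry a \<rho> i = a i powr (\<rho> - 1)" if i: "i \<in> {1..k}" for i
    proof -
      obtain m where m: "i = Suc m" using i by (cases i) auto
      have ai: "a i > 0" using posS m by simp
      have "Gam_entry a \<rho> i = a i powr (1 + \<rho>) / a i powr 2"
      proof -
        have "a i powr 2 = (a i)^2" using ai by simp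
        thus ?thesis unfolding Gam_entry_def using gB[of m] m by simp
      qed
      also have "\<dots> = a i powr ((1 + \<rho>) - 2)" by (simp only: powr_diff)
      also have "(1 + \<rho>) - 2 = \<rho> - 1" by simp
      finally show ?thesis .
    qed
    have inv: "1 / (a i)^2 \<le> (real i)^2" if i: "i \<in> {1..k}" for i
    proof -
      obtain m where m: "i = Suc m" using i by (cases i) auto
      have ai: "a i > 0" using posS m by simp
      have "1 / a i \<le> real i" using bnds[of m] m by simp
      hence "(1 / a i)^2 \<le> (real i)^2" using ai by (intro power_mono) auto
      thus ?thesis by (simp add: power_divide)
    qed
    show ?thesis
    proof (cases "\<rho> = 1")
      case True
      have "lp_norm (expo 1) (Gam_entry a 1) k \<le> 1"
        using ent True posS by (intro lp_inf k1) auto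
      hence "gam a k * lp_norm (expo 1) (Gam_entry a 1) k \<le> gam a k * 1"
        using gB[of n] n by (intro mult_left_mono) auto
      also have "\<dots> \<le> 4 / (real k + 1)^2" using gk by simp
      also have "\<dots> \<le> 4 / real k ^ 2" using kp
        by (intro divide_left_mono power_mono mult_pos_pos) auto
      also have "\<dots> = (4 / 3 powr ((1 - 1) / 2)) * real k powr (- (1 + 3 * 1) / 2)"
      proof -
        have h2: "3 powr ((1 - 1) / 2::real) = 1" by simp
        have h3: "real k powr (- (1 + 3 * 1) / 2) = inverse (real k ^ 2)"
          using kp by (simp add: powr_minus)
        show ?thesis unfolding h2 h3 by (simp add: divide_inverse)
      qed
      finally show ?thesis using True by simp
    next
      case False
      hence rl: "\<rho> < 1" using r1 by simp
      define q where "q = (1 - \<rho>) / 2"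
      have q0: "0 \<le> q" "q \<le> 1/2" using r0 rl by (auto simp: q_def)
      have bnd: "\<forall>i\<in>{1..k}. \<bar>Gam_entry a \<rho> i\<bar> powr (2 / (1 - \<rho>)) \<le> 1 * (real i)^2"
      proof
        fix i assume i: "i \<in> {1..k}"
        then obtain m where m: "i = Suc m" by (cases i) auto
        have ai: "a i > 0" using posS m by simp
        have "\<bar>Gam_entry a \<rho> i\<bar> powr (2 / (1 - \<rho>)) = a i powr ((\<rho> - 1) * (2 / (1 - \<rho>)))"
          using ent[OF i] ai by (simp add: powr_powr)
        also have "(\<rho> - 1) * (2 / (1 - \<rho>)) = - 2" using rl by (simp add: field_simps)
        also have "a i powr (- 2) = 1 / (a i)^2" using ai by (simp add: powr_minus divide_inverse)
        finally show "\<bar>Gam_entry a \<rho> i\<bar> powr (2 / (1 - \<rho>)) \<le> 1 * (real i)^2" using inv[OF i] by simp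
      qed
      have "lp_norm (expo \<rho>) (Gam_entry a \<rho>) k \<le> (1 * (real k * (real k+1)^2/3)) powr q"
        unfolding q_def by (rule lp_fin[OF r0 rl bnd]) simp
      also have "\<dots> \<le> 3 powr (-q) * ((real k+1)/real k) * real k powr (3*q)"
        using S_bound[of "real k" q] k1 q0 by simp
      finally have L: "lp_norm (expo \<rho>) (Gam_entry a \<rho>) k \<le> 3 powr (-q) * ((real k+1)/real k) * real k powr (3*q)" .
      have "gam a k * lp_norm (expo \<rho>) (Gam_entry a \<rho>) k
          \<le> 4 / (real k + 1)^2 * (3 powr (-q) * ((real k+1)/real k) * real k powr (3*q))"
        using gB[of n] n L gk lp_nonneg[OF k1] by (intro mult_mono) auto
      also have "\<dots> \<le> (4 * 3 powr (-q)) * (real k powr (3*q) / real k ^ 2)"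
        using kp by (rule algB) auto
      also have "\<dots> = (4 / 3 powr ((1 - \<rho>) / 2)) * real k powr (- (1 + 3 * \<rho>) / 2)"
      proof -
        have e1: "- (1 + 3 * \<rho>) / 2 = 3*q - 2" unfolding q_def by (simp add: field_simps)
        have e2: "(1 - \<rho>) / 2 = q" unfolding q_def by simp
        show ?thesis unfolding e1 e2 kpow[OF kp] by (simp add: powr_minus divide_inverse)
      qed
      finally show ?thesis .
    qed
  qed
  show ?thesis using pos a1 main by (simp add: rate_cond_def)
qed


theorem proposition3p4:
  fixes \<rho> :: real
  assumes "0 \<le> \<rho>" and "\<rho> \<le> 1"
  shows "(\<forall>a :: nat \<Rightarrow> real. (\<forall>k\<ge>1. a k = 2 / (real k + 1)) \<longrightarrow>
            (\<forall>k\<ge>1. 0 < a k \<and> a k \<le> 1) \<and>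
            rate_cond a \<rho> (2 powr (1 + \<rho>) * 3 powr (- (1 - \<rho>) / 2)))
       \<and> (\<forall>a :: nat \<Rightarrow> real. a 1 = 1 \<and>
            (\<forall>k\<ge>2. 0 < a k \<and> (a k)\<^sup>2 = (1 - a k) * gam a (k - 1)) \<longrightarrow>
            (\<forall>k\<ge>1. 0 < a k \<and> a k \<le> 1) \<and>
            rate_cond a \<rho> (4 / 3 powr ((1 - \<rho>) / 2)))"
proof -
  have A: "\<And>a. (\<forall>k\<ge>1. a k = 2 / (real k + 1)) \<Longrightarrow> (\<forall>k\<ge>1. 0 < a k \<and> a k \<le> 1) \<and> rate_cond a \<rho> (2 powr (1 + \<rho>) * 3 powr (- (1 - \<rho>) / 2))"
    using partA[OF assms] by blast
  have B: "\<And>a. a 1 = 1 \<and> (\<forall>k\<ge>2. 0 < a k \<and> (a k)\<^sup>2 = (1 - a k) * gam a (k - 1)) \<Longrightarrow> (\<forall>k\<ge>1. 0 < a k \<and> a k \<le> 1) \<and> rate_cond a \<rho> (4 / 3 powr ((1 - \<rho>) / 2))"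
    using partB[OF assms] by blast
  show ?thesis using A B by blast
qed

end
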